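(* Let $H_<$ be an ordered graph and let $\delta>0$. There exists a constant $c_2=c_2(H_<,\delta)>0$ such that every ordered graph $G_<$ on $n$ vertices that does not contain $H_<$ as an induced ordered subgraph has a subset $U\subset V(G)$ with $|U|\ge c_2 n$ such that either $\Delta(G[U])\le \delta|U|$ or $\Delta(\overline{G}[U])\le \delta |U|$.
   Context: An ordered graph $G_<$ is a graph with a total ordering $<$ of its vertex set. $H_{<'}$ is an induced ordered subgraph of $G_<$ if there is an injection $\phi:V(H)\to V(G)$ with $u<'v\Rightarrow \phi(u)<\phi(v)$ and $uv\in E(H)\iff\phi(u)\phi(v)\in E(G)$. $G[U]$ is the induced subgraph on $U$, $\overline{G}$ the complement of $G$, and $\Delta$ the maximum degree. *)

theory Defs
  imports Complex_Main
begin

text \<open>An ordered graph on n vertices: vertex set {0..<n} ordered by the natural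
order of nat, edges given by a symmetric, irreflexive relation E on {0..<n}.\<close>
definition ograph :: "nat \<Rightarrow> (nat \<Rightarrow> nat \<Rightarrow> bool) \<Rightarrow> bool" where
  "ograph n E \<longleftrightarrow> (\<forall>u<n. \<forall>v<n. E u v = E v u) \<and> (\<forall>u<n. \<not> E u u)"

definition induced_ord_sub ::
  "nat \<Rightarrow> (nat \<Rightarrow> nat \<Rightarrow> bool) \<Rightarrow> nat \<Rightarrow> (nat \<Rightarrow> nat \<Rightarrow> bool) \<Rightarrow> bool" where
  "induced_ord_sub k EH n EG \<longleftrightarrow>
     (\<exists>\<phi>. (\<forall>u<k. \<phi> u < n) \<and>
          (\<forall>u<k. \<forall>v<k. u < v \<longrightarrow> \<phi> u < \<phi> v) \<and>
          (\<forall>u<k. \<forall>v<k. u \<noteq> v \<longrightarrow> (EH u v \<longleftrightarrow> EG (\<phi> u) (\<phi> v))))"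

definition deg_in :: "(nat \<Rightarrow> nat \<Rightarrow> bool) \<Rightarrow> nat set \<Rightarrow> nat \<Rightarrow> nat" where
  "deg_in E U u = card {v \<in> U. v \<noteq> u \<and> E u v}"

definition max_deg_in :: "(nat \<Rightarrow> nat \<Rightarrow> bool) \<Rightarrow> nat set \<Rightarrow> nat" where
  "max_deg_in E U = (if U = {} then 0 else Max (deg_in E U ` U))"

definition compl_graph :: "(nat \<Rightarrow> nat \<Rightarrow> bool) \<Rightarrow> nat \<Rightarrow> nat \<Rightarrow> bool" where
  "compl_graph E u v \<longleftrightarrow> u \<noteq> v \<and> \<not> E u v"

end

theory Submission
  imports Defs
begin

definition sp :: "(nat \<Rightarrow> nat \<Rightarrow> bool) \<Rightarrow> nat set \<Rightarrow> nat set \<Rightarrow> real \<Rightarrow> bool" where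
  "sp F A B e \<longleftrightarrow> (\<forall>x\<in>A. real (card {y\<in>B. F x y}) \<le> e * real (card B))"

lemma embed:
  fixes F :: "nat \<Rightarrow> nat \<Rightarrow> bool" and W :: "nat set" and e a0 :: real
  assumes symF: "\<forall>x\<in>W. \<forall>y\<in>W. F x y = F y x"
  and e: "0 < e" "e \<le> 1" and a0: "0 < a0" and finW: "finite W"
  and nopair: "\<forall>A B. A \<subseteq> W \<longrightarrow> B \<subseteq> W \<longrightarrow> A \<inter> B = {} \<longrightarrow> a0 \<le> real (card A) \<longrightarrow> a0 \<le> real (card B)
       \<longrightarrow> \<not> sp F A B e \<and> \<not> sp (\<lambda>x y. \<not> F x y) A B e"
  shows "\<forall>P S. (\<forall>u<k. \<forall>v<k. P u v = P v u) \<longrightarrow> (\<forall>i<k. S i \<subseteq> W)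
     \<longrightarrow> (\<forall>i<k. \<forall>j<k. i<j \<longrightarrow> (\<forall>x\<in>S i. \<forall>y\<in>S j. x<y))
     \<longrightarrow> (\<forall>i<k. a0 * real k * (1/e)^k \<le> real (card (S i)))
     \<longrightarrow> (\<exists>\<phi>. (\<forall>i<k. \<phi> i \<in> S i) \<and> (\<forall>u<k. \<forall>v<k. u\<noteq>v \<longrightarrow> (P u v \<longleftrightarrow> F (\<phi> u) (\<phi> v))))"
proof (induction k)
  case 0 show ?case by simp
next
  case (Suc k)
  show ?case
  proof (intro allI impI)
    fix P :: "nat \<Rightarrow> nat \<Rightarrow> bool" and S :: "nat \<Rightarrow> nat set"
    assume Psym: "\<forall>u<Suc k. \<forall>v<Suc k. P u v = P v u"
      and SW: "\<forall>i<Suc k. S i \<subseteq> W"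
      and Sord: "\<forall>i<Suc k. \<forall>j<Suc k. i<j \<longrightarrow> (\<forall>x\<in>S i. \<forall>y\<in>S j. x<y)"
      and Scard: "\<forall>i<Suc k. a0 * real (Suc k) * (1/e)^(Suc k) \<le> real (card (S i))"
    have fin: "finite (S i)" if "i < Suc k" for i using SW finW finite_subset that by blast
    have pw: "(1/e)^(Suc k) \<ge> 1"
    proof -
      have "1 \<le> 1/e" using e by simp
      then show ?thesis by (rule one_le_power)
    qed
    have cS: "real (card (S i)) \<ge> a0 * real (Suc k)" if "i < Suc k" for i
    proof -
      have "a0 * real (Suc k) * 1 \<le> a0 * real (Suc k) * (1/e)^(Suc k)"
        using pw a0 by (intro mult_left_mono) auto
      then show ?thesis using Scard that by auto
    qed
    define good where "good x \<longleftrightarrow> (\<forall>j<k. e * real (card (S (Suc j))) < real (card {y\<in>S (Suc j). P 0 (Suc j) = F x y}))" for x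
    have "\<exists>x\<in>S 0. good x"
    proof (rule ccontr)
      assume nx: "\<not> (\<exists>x\<in>S 0. good x)"
      define T where "T j = {x\<in>S 0. \<not> (e * real (card (S (Suc j))) < real (card {y\<in>S (Suc j). P 0 (Suc j) = F x y}))}" for j
      have cover: "S 0 \<subseteq> (\<Union>j<k. T j)" using nx unfolding good_def T_def by auto
      have c0: "real (card (S 0)) \<ge> a0 * real (Suc k)" using cS by auto
      have kpos: "k > 0"
      proof (rule ccontr)
        assume "\<not> k > 0" then have "S 0 = {}" using cover by auto
        moreover have "a0 * real (Suc k) > 0" using a0 by simp
        ultimately show False using c0 by simp
      qed
      have "\<exists>j<k. real (card (T j)) \<ge> real (card (S 0)) / real k"
      proof (rule ccontr)
        assume "\<not> (\<exists>j<k. real (card (T j)) \<ge> real (card (S 0)) / real k)"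
        then have lt: "\<forall>j<k. real (card (T j)) < real (card (S 0)) / real k" by (meson not_le)
        have "real (card (S 0)) \<le> real (card (\<Union>j<k. T j))"
          using cover fin[of 0] by (intro of_nat_mono card_mono) (auto simp: T_def)
        also have "\<dots> \<le> real (\<Sum>j<k. card (T j))" by (intro of_nat_mono card_UN_le) auto
        also have "\<dots> = (\<Sum>j<k. real (card (T j)))" by simp
        also have "\<dots> < (\<Sum>j<k. real (card (S 0)) / real k)"
          using kpos lt by (intro sum_strict_mono) auto
        also have "\<dots> = real (card (S 0))" using kpos by simp
        finally show False by simp
      qed
      then obtain j where j: "j<k" "real (card (T j)) \<ge> real (card (S 0)) / real k" by blast
      have TS: "T j \<subseteq> W" "S (Suc j) \<subseteq> W" using SW j unfolding T_def by auto
      have disj: "T j \<inter> S (Suc j) = {}"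
      proof -
        have "\<forall>x\<in>S 0. \<forall>y\<in>S (Suc j). x<y" using Sord j by auto
        then show ?thesis unfolding T_def by auto
      qed
      have "a0 * real (Suc k) / real k \<le> real (card (S 0)) / real k"
        using c0 kpos by (simp add: divide_right_mono)
      moreover have "a0 \<le> a0 * real (Suc k) / real k" using kpos a0 by (simp add: field_simps)
      ultimately have cT: "a0 \<le> real (card (T j))" using j by linarith
      have cS1: "a0 \<le> real (card (S (Suc j)))" 
      proof -
        have "a0 * 1 \<le> a0 * real (Suc k)" using a0 by (intro mult_left_mono) auto
        then show ?thesis using cS[of "Suc j"] j by simp
      qed
      have bad: "real (card {y\<in>S (Suc j). P 0 (Suc j) = F x y}) \<le> e * real (card (S (Suc j)))" if "x \<in> T j" for x
        using that unfolding T_def by auto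
      show False
      proof (cases "P 0 (Suc j)")
        case True
        then have "sp F (T j) (S (Suc j)) e" using bad unfolding sp_def by simp
        then show False using nopair TS disj cT cS1 by blast
      next
        case False
        then have "sp (\<lambda>x y. \<not> F x y) (T j) (S (Suc j)) e" using bad unfolding sp_def by simp
        then show False using nopair TS disj cT cS1 by blast
      qed
    qed
    then obtain x where x: "x \<in> S 0" "good x" by blast
    define S' where "S' j = {y\<in>S (Suc j). P 0 (Suc j) = F x y}" for j
    define P' where "P' u v = P (Suc u) (Suc v)" for u v
    have "\<exists>\<phi>. (\<forall>i<k. \<phi> i \<in> S' i) \<and> (\<forall>u<k. \<forall>v<k. u\<noteq>v \<longrightarrow> (P' u v \<longleftrightarrow> F (\<phi> u) (\<phi> v)))"
    proof -
      have h1: "\<forall>u<k. \<forall>v<k. P' u v = P' v u" using Psym unfolding P'_def by auto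
      have h2: "\<forall>i<k. S' i \<subseteq> W" using SW unfolding S'_def by auto
      have h3: "\<forall>i<k. \<forall>j<k. i<j \<longrightarrow> (\<forall>x\<in>S' i. \<forall>y\<in>S' j. x<y)" using Sord unfolding S'_def by auto
      have h4: "\<forall>i<k. a0 * real k * (1/e)^k \<le> real (card (S' i))"
      proof (intro allI impI)
        fix i assume i: "i < k"
        have "e * real (card (S (Suc i))) < real (card (S' i))" using x(2) i unfolding good_def S'_def by auto
        moreover have "e * (a0 * real (Suc k) * (1/e)^(Suc k)) \<le> e * real (card (S (Suc i)))"
          using Scard i e by (intro mult_left_mono) auto
        moreover have "e * (a0 * real (Suc k) * (1/e)^(Suc k)) = a0 * real (Suc k) * (1/e)^k"
          using e by (simp add: field_simps)
        moreover have "a0 * real k * (1/e)^k \<le> a0 * real (Suc k) * (1/e)^k"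
          using a0 e by (intro mult_right_mono mult_left_mono) auto
        ultimately show "a0 * real k * (1/e)^k \<le> real (card (S' i))" by linarith
      qed
      show ?thesis by (rule Suc.IH[THEN spec, THEN spec, THEN mp, THEN mp, THEN mp, THEN mp, OF h1 h2 h3 h4])
    qed
    then obtain \<phi> where \<phi>: "\<forall>i<k. \<phi> i \<in> S' i" "\<forall>u<k. \<forall>v<k. u\<noteq>v \<longrightarrow> (P' u v \<longleftrightarrow> F (\<phi> u) (\<phi> v))" by blast
    define \<psi> where "\<psi> i = (case i of 0 \<Rightarrow> x | Suc j \<Rightarrow> \<phi> j)" for i
    show "\<exists>\<phi>. (\<forall>i<Suc k. \<phi> i \<in> S i) \<and> (\<forall>u<Suc k. \<forall>v<Suc k. u\<noteq>v \<longrightarrow> (P u v \<longleftrightarrow> F (\<phi> u) (\<phi> v)))"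
    proof (intro exI[of _ \<psi>] conjI allI impI)
      fix i assume "i < Suc k"
      then show "\<psi> i \<in> S i" using x \<phi>(1) unfolding \<psi>_def S'_def by (cases i) auto
    next
      fix u v assume uv: "u < Suc k" "v < Suc k" "u \<noteq> v"
      have xW: "x \<in> W" using x SW by auto
      have phW: "\<phi> j \<in> W" "\<phi> j \<in> S (Suc j)" "P 0 (Suc j) = F x (\<phi> j)" if "j < k" for j
        using \<phi>(1) that SW unfolding S'_def by auto
      show "P u v \<longleftrightarrow> F (\<psi> u) (\<psi> v)"
      proof (cases u)
        case 0
        then obtain j where "v = Suc j" using uv by (cases v) auto
        then show ?thesis using 0 phW[of j] uv unfolding \<psi>_def by auto
      next
        case (Suc i)
        show ?thesis
        proof (cases v)
          case 0
          then have "P u v = P v u" using Psym uv by auto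
          moreover have "F (\<phi> i) x = F x (\<phi> i)" using symF xW phW[of i] Suc uv by auto
          ultimately show ?thesis using 0 Suc phW[of i] uv unfolding \<psi>_def by auto
        next
          case (Suc j)
          then show ?thesis using \<open>u = Suc i\<close> \<phi>(2) uv unfolding \<psi>_def P'_def by auto
        qed
      qed
    qed
  qed
qed

lemma blocks:
  fixes W :: "nat set"
  assumes finW: "finite W" and kq: "k * q \<le> card W"
  shows "\<exists>S. (\<forall>i<k. S i \<subseteq> W \<and> card (S i) = q) \<and> (\<forall>i<k. \<forall>j<k. i<j \<longrightarrow> (\<forall>x\<in>S i. \<forall>y\<in>S j. x<y))"
proof -
  define xs where "xs = sorted_list_of_set W"
  have len: "length xs = card W" unfolding xs_def by simp
  have dist: "distinct xs" unfolding xs_def by simp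
  have srt: "sorted_wrt (<) xs" unfolding xs_def by simp
  have setxs: "set xs = W" unfolding xs_def using finW by simp
  define S where "S i = (\<lambda>p. xs ! p) ` {i*q..<i*q+q}" for i
  show ?thesis
  proof (intro exI[of _ S] conjI allI impI ballI)
    fix i assume i: "i < k"
    have bnd: "i*q + q \<le> card W"
    proof -
      have "i*q + q = (i+1)*q" by simp
      also have "\<dots> \<le> k*q" using i by (intro mult_le_mono1) simp
      finally show ?thesis using kq by simp
    qed
    show "S i \<subseteq> W" unfolding S_def using bnd len setxs by auto
    have "inj_on (\<lambda>p. xs ! p) {i*q..<i*q+q}"
      using dist bnd len by (auto simp: inj_on_def nth_eq_iff_index_eq)
    then show "card (S i) = q" unfolding S_def by (simp add: card_image)
  next
    fix i j x y assume ij: "i < k" "j < k" "i < j" and x: "x \<in> S i" and y: "y \<in> S j"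
    obtain p where p: "i*q \<le> p" "p < i*q+q" "x = xs ! p" using x unfolding S_def by auto
    obtain p' where p': "j*q \<le> p'" "p' < j*q+q" "y = xs ! p'" using y unfolding S_def by auto
    have "i*q + q = (i+1)*q" by simp
    also have "\<dots> \<le> j*q" using ij by (intro mult_le_mono1) simp
    finally have pp: "p < p'" using p p' by simp
    have "j*q + q \<le> card W"
    proof -
      have "j*q + q = (j+1)*q" by simp
      also have "\<dots> \<le> k*q" using ij by (intro mult_le_mono1) simp
      finally show ?thesis using kq by simp
    qed
    then have "p' < length xs" using p' len by simp
    then show "x < y" using sorted_wrt_nth_less[OF srt pp] p p' by simp
  qed
qed

lemma pair:
  fixes e :: real
  assumes og: "ograph n EG" and oh: "ograph k EH" and nind: "\<not> induced_ord_sub k EH n EG"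
    and W: "W \<subseteq> {0..<n}" and kpos: "k > 0" and e: "0 < e" "e \<le> 1" and m: "2*k \<le> card W"
  shows "\<exists>A B. A \<subseteq> W \<and> B \<subseteq> W \<and> A \<inter> B = {} \<and>
     real (card A) \<ge> e^k / (2 * real k ^ 2) * real (card W) \<and>
     real (card B) \<ge> e^k / (2 * real k ^ 2) * real (card W) \<and>
     (sp EG A B e \<or> sp (\<lambda>x y. \<not> EG x y) A B e)"
proof (rule ccontr)
  assume na: "\<not> ?thesis"
  define a0 where "a0 = e^k / (2 * real k ^ 2) * real (card W)"
  have finW: "finite W" using W finite_subset by blast
  have a0pos: "0 < a0" unfolding a0_def using e kpos m by (auto intro!: mult_pos_pos divide_pos_pos)
  have Wn: "\<forall>x\<in>W. x < n" using W by auto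
  have symF: "\<forall>x\<in>W. \<forall>y\<in>W. EG x y = EG y x" using og Wn unfolding ograph_def by blast
  have nopair: "\<forall>A B. A \<subseteq> W \<longrightarrow> B \<subseteq> W \<longrightarrow> A \<inter> B = {} \<longrightarrow> a0 \<le> real (card A) \<longrightarrow> a0 \<le> real (card B)
       \<longrightarrow> \<not> sp EG A B e \<and> \<not> sp (\<lambda>x y. \<not> EG x y) A B e"
    using na unfolding a0_def by blast
  define q where "q = card W div k"
  have kq: "k * q \<le> card W" unfolding q_def by (simp add: mult.commute)
  have q2: "card W \<le> 2 * k * q"
  proof -
    have "card W = k * q + card W mod k" unfolding q_def by simp
    moreover have "card W mod k < k" using kpos by simp
    ultimately have cw: "card W < k * q + k" by linarith
    have "q \<noteq> 0"
    proof
      assume "q = 0" then show False using cw m by simp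
    qed
    then have "k \<le> k * q" by simp
    moreover have "2 * k * q = k * q + k * q" by simp
    ultimately show ?thesis using cw by linarith
  qed
  obtain S where S: "\<forall>i<k. S i \<subseteq> W \<and> card (S i) = q" "\<forall>i<k. \<forall>j<k. i<j \<longrightarrow> (\<forall>x\<in>S i. \<forall>y\<in>S j. x<y)"
    using blocks[OF finW kq] by blast
  have thr: "a0 * real k * (1/e)^k = real (card W) / (2 * real k)"
  proof -
    have "e^k * (1/e)^k = 1" using e by (simp add: power_mult_distrib[symmetric])
    then show ?thesis unfolding a0_def using kpos by (simp add: field_simps power2_eq_square)
  qed
  have cq: "a0 * real k * (1/e)^k \<le> real q"
  proof -
    have "real (card W) \<le> 2 * real k * real q" using q2 by (metis of_nat_le_iff of_nat_mult of_nat_numeral)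
    then show ?thesis unfolding thr using kpos by (simp add: field_simps)
  qed
  have osym: "\<forall>u<k. \<forall>v<k. EH u v = EH v u" using oh unfolding ograph_def by auto
  have h2: "\<forall>i<k. S i \<subseteq> W" using S(1) by blast
  have h4: "\<forall>i<k. a0 * real k * (1/e)^k \<le> real (card (S i))" using S(1) cq by simp
  obtain \<phi> where \<phi>: "\<forall>i<k. \<phi> i \<in> S i" "\<forall>u<k. \<forall>v<k. u\<noteq>v \<longrightarrow> (EH u v \<longleftrightarrow> EG (\<phi> u) (\<phi> v))"
    using embed[OF symF e a0pos finW nopair, THEN spec, THEN spec, THEN mp, THEN mp, THEN mp, THEN mp, OF osym h2 S(2) h4]
    by blast
  have "induced_ord_sub k EH n EG"
    unfolding induced_ord_sub_def
  proof (intro exI[of _ \<phi>] conjI allI impI)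
    fix u assume "u < k" then show "\<phi> u < n" using \<phi>(1) S(1) W by fastforce
  next
    fix u v assume "u < k" "v < k" "u < v" then show "\<phi> u < \<phi> v" using \<phi>(1) S(2) by blast
  next
    fix u v assume "u < k" "v < k" "u \<noteq> v" then show "EH u v \<longleftrightarrow> EG (\<phi> u) (\<phi> v)" using \<phi>(2) by blast
  qed
  then show False using nind by simp
qed

definition D :: "(nat \<Rightarrow> nat \<Rightarrow> bool) \<Rightarrow> nat set \<Rightarrow> nat" where
  "D F U = (\<Sum>u\<in>U. card {v\<in>U. F u v})"

lemma card_as_sum: "finite Y \<Longrightarrow> card {y\<in>Y. P y} = (\<Sum>y\<in>Y. if P y then 1 else 0)"
proof -
  assume f: "finite Y"
  have "(\<Sum>y\<in>Y. if P y then 1 else 0) = (\<Sum>y\<in>{y\<in>Y. P y}. (1::nat))"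
    using f by (rule sum.inter_filter[symmetric])
  then show ?thesis by simp
qed

lemma dc:
  assumes "finite X" "finite Y" "\<forall>x\<in>X. \<forall>y\<in>Y. F x y = F y x"
  shows "(\<Sum>x\<in>X. card {y\<in>Y. F x y}) = (\<Sum>y\<in>Y. card {x\<in>X. F y x})"
proof -
  have "(\<Sum>x\<in>X. card {y\<in>Y. F x y}) = (\<Sum>x\<in>X. \<Sum>y\<in>Y. if F x y then 1 else 0)"
    using assms by (simp add: card_as_sum)
  also have "\<dots> = (\<Sum>y\<in>Y. \<Sum>x\<in>X. if F x y then 1 else 0)" by (rule sum.swap)
  also have "\<dots> = (\<Sum>y\<in>Y. \<Sum>x\<in>X. if F y x then 1 else 0)"
    using assms(3) by (intro sum.cong refl) auto
  also have "\<dots> = (\<Sum>y\<in>Y. card {x\<in>X. F y x})"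
    using assms by (simp add: card_as_sum)
  finally show ?thesis .
qed

lemma grow:
  fixes F :: "nat \<Rightarrow> nat \<Rightarrow> bool" and A B U' :: "nat set" and e :: real and a p :: nat
  assumes symF: "\<forall>x\<in>A\<union>B. \<forall>y\<in>A\<union>B. F x y = F y x" and finA: "finite A" and finB: "finite B"
   and disj: "A \<inter> B = {}" and spAB: "sp F A B e" and e: "0 \<le> e"
   and U'A: "U' \<subseteq> A" and cU': "card U' = a*p"
   and DU': "real (D F U') \<le> real a * real p ^ 2 + 2 * e * real a ^ 2 * real p ^ 2"
   and cB: "2*p \<le> card B"
  shows "\<exists>U. U \<subseteq> A \<union> B \<and> card U = (a+1)*p \<and>
     real (D F U) \<le> real (a+1) * real p ^ 2 + 2 * e * real (a+1) ^ 2 * real p ^ 2"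
proof -
  have finU': "finite U'" using U'A finA finite_subset by blast
  define deg where "deg X x = card {y\<in>X. F x y}" for X x
  have eBU: "real (\<Sum>b\<in>B. deg U' b) \<le> e * real (card B) * real (card U')"
  proof -
    have "(\<Sum>b\<in>B. deg U' b) = (\<Sum>y\<in>U'. card {b\<in>B. F y b})"
      unfolding deg_def using finB finU' symF U'A by (intro dc) auto
    then have "real (\<Sum>b\<in>B. deg U' b) = (\<Sum>y\<in>U'. real (card {b\<in>B. F y b}))" by simp
    also have "\<dots> \<le> (\<Sum>y\<in>U'. e * real (card B))"
      using spAB U'A unfolding sp_def by (intro sum_mono) auto
    also have "\<dots> = e * real (card B) * real (card U')" by simp
    finally show ?thesis .
  qed
  define Q where "Q = {b\<in>B. real (deg U' b) \<le> 2 * e * real (card U')}"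
  have QB: "2 * card (B - Q) \<le> card B"
  proof (cases "B - Q = {}")
    case True then have "card (B - Q) = 0" by (metis card.empty)
    then show ?thesis by simp
  next
    case False
    define t where "t = e * real (card U')"
    have t0: "t \<ge> 0" unfolding t_def using e by simp
    have "(\<Sum>b\<in>B - Q. 2 * t) < (\<Sum>b\<in>B - Q. real (deg U' b))"
      using False finB unfolding Q_def t_def by (intro sum_strict_mono) auto
    also have "\<dots> \<le> (\<Sum>b\<in>B. real (deg U' b))"
      using finB by (intro sum_mono2) auto
    also have "\<dots> \<le> real (card B) * t" using eBU unfolding t_def by (simp add: mult_ac)
    finally have "real (card (B - Q)) * 2 * t < real (card B) * t" by (simp add: mult_ac)
    moreover have "t > 0"
    proof (rule ccontr)
      assume "\<not> t > 0" then have "t = 0" using t0 by simp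
      then show False using calculation by simp
    qed
    ultimately have "real (card (B - Q)) * 2 < real (card B)"
      by (metis mult_less_cancel_right_pos)
    then show ?thesis by linarith
  qed
  have QsB: "Q \<subseteq> B" unfolding Q_def by auto
  have "card (B - Q) = card B - card Q" using QsB finB by (simp add: card_Diff_subset finite_subset)
  moreover have "card Q \<le> card B" using QsB finB by (simp add: card_mono)
  ultimately have "card B \<le> card Q + card (B - Q)" by linarith
  then have "p \<le> card Q" using QB cB by linarith
  then obtain P where P: "P \<subseteq> Q" "card P = p" "finite P" by (rule obtain_subset_with_card_n)
  have PB: "P \<subseteq> B" using P unfolding Q_def by auto
  have PU: "P \<inter> U' = {}" using PB U'A disj by auto
  define U where "U = P \<union> U'"
  have cU: "card U = (a+1)*p" unfolding U_def using card_Un_disjoint[OF P(3) finU' PU] P cU' by simp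
  have split: "card {v\<in>U. F u v} = card {v\<in>P. F u v} + card {v\<in>U'. F u v}" for u
  proof -
    have "{v\<in>U. F u v} = {v\<in>P. F u v} \<union> {v\<in>U'. F u v}" unfolding U_def by auto
    then show ?thesis using PU P(3) finU' by (simp add: card_Un_disjoint disjoint_iff)
  qed
  have DU: "D F U = (\<Sum>u\<in>P. card {v\<in>P. F u v}) + (\<Sum>u\<in>P. card {v\<in>U'. F u v})
        + (\<Sum>u\<in>U'. card {v\<in>P. F u v}) + D F U'"
  proof -
    have "D F U = (\<Sum>u\<in>U. card {v\<in>P. F u v} + card {v\<in>U'. F u v})"
      unfolding D_def by (rule sum.cong[OF refl split])
    also have "\<dots> = (\<Sum>u\<in>U. card {v\<in>P. F u v}) + (\<Sum>u\<in>U. card {v\<in>U'. F u v})"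
      by (rule sum.distrib)
    also have "(\<Sum>u\<in>U. card {v\<in>P. F u v}) = (\<Sum>u\<in>P. card {v\<in>P. F u v}) + (\<Sum>u\<in>U'. card {v\<in>P. F u v})"
      unfolding U_def by (rule sum.union_disjoint[OF P(3) finU' PU])
    also have "(\<Sum>u\<in>U. card {v\<in>U'. F u v}) = (\<Sum>u\<in>P. card {v\<in>U'. F u v}) + D F U'"
      unfolding U_def D_def by (rule sum.union_disjoint[OF P(3) finU' PU])
    finally show ?thesis by simp
  qed
  have s1: "(\<Sum>u\<in>P. card {v\<in>P. F u v}) \<le> p * p"
  proof -
    have "(\<Sum>u\<in>P. card {v\<in>P. F u v}) \<le> (\<Sum>u\<in>P. p)"
      using P by (intro sum_mono) (metis (no_types, lifting) card_mono mem_Collect_eq subsetI)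
    then show ?thesis using P by simp
  qed
  have s2: "real (\<Sum>u\<in>P. card {v\<in>U'. F u v}) \<le> real p * (2 * e * real (card U'))"
  proof -
    have "real (\<Sum>u\<in>P. card {v\<in>U'. F u v}) = (\<Sum>u\<in>P. real (deg U' u))" unfolding deg_def by simp
    also have "\<dots> \<le> (\<Sum>u\<in>P. 2 * e * real (card U'))"
      using P unfolding Q_def by (intro sum_mono) auto
    also have "\<dots> = real p * (2 * e * real (card U'))" using P by simp
    finally show ?thesis .
  qed
  have s3: "(\<Sum>u\<in>U'. card {v\<in>P. F u v}) = (\<Sum>u\<in>P. card {v\<in>U'. F u v})"
    using P(3) finU' symF PB U'A by (intro dc[symmetric]) auto
  have "real (D F U) \<le> real p * real p + 2 * (real p * (2 * e * real (card U'))) +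
       (real a * real p ^ 2 + 2 * e * real a ^ 2 * real p ^ 2)"
  proof -
    have "real (D F U) = real (\<Sum>u\<in>P. card {v\<in>P. F u v}) + 2 * real (\<Sum>u\<in>P. card {v\<in>U'. F u v}) + real (D F U')"
      using DU s3 by simp
    also have "\<dots> \<le> real p * real p + 2 * (real p * (2 * e * real (card U'))) +
       (real a * real p ^ 2 + 2 * e * real a ^ 2 * real p ^ 2)"
    proof -
      have r1: "real (\<Sum>u\<in>P. card {v\<in>P. F u v}) \<le> real p * real p"
        using s1 by (metis of_nat_le_iff of_nat_mult)
      show ?thesis using r1 s2 DU' by linarith
    qed
    finally show ?thesis .
  qed
  also have "\<dots> = real (a+1) * real p ^ 2 + 2 * e * real p ^ 2 * (real a ^ 2 + 2 * real a)"
    using cU' by (simp add: algebra_simps power2_eq_square)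
  also have "\<dots> \<le> real (a+1) * real p ^ 2 + 2 * e * real p ^ 2 * (real (a+1) ^ 2)"
    using e by (intro add_left_mono mult_left_mono) (auto simp: power2_eq_square algebra_simps)
  finally have "real (D F U) \<le> real (a+1) * real p ^ 2 + 2 * e * real (a+1) ^ 2 * real p ^ 2"
    by (simp add: mult_ac)
  moreover have "U \<subseteq> A \<union> B" unfolding U_def using PB U'A by auto
  ultimately show ?thesis using cU by blast
qed

lemma D_empty: "D F {} = 0" unfolding D_def by simp

lemma claim:
  fixes e :: real
  assumes og: "ograph n EG" and oh: "ograph k EH" and nind: "\<not> induced_ord_sub k EH n EG"
    and kpos: "k>0" and e: "0<e" "e\<le>1" and pk: "k \<le> p"
  shows "\<forall>a b W. a + b = s \<longrightarrow> W \<subseteq> {0..<n} \<longrightarrow>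
     real (card W) \<ge> (1/(e^k/(2*real k^2)))^s * (2*real p) \<longrightarrow>
     (\<exists>U. U \<subseteq> W \<and> card U = a*p \<and> real (D EG U) \<le> real a * real p^2 + 2*e*real a^2*real p^2) \<or>
     (\<exists>U. U \<subseteq> W \<and> card U = b*p \<and> real (D (compl_graph EG) U) \<le> real b * real p^2 + 2*e*real b^2*real p^2)"
proof (induction s)
  case 0
  show ?case
  proof (intro allI impI)
    fix a b :: nat and W assume "a + b = 0"
    then have "a = 0" by simp
    then show "(\<exists>U. U \<subseteq> W \<and> card U = a*p \<and> real (D EG U) \<le> real a * real p^2 + 2*e*real a^2*real p^2) \<or>
     (\<exists>U. U \<subseteq> W \<and> card U = b*p \<and> real (D (compl_graph EG) U) \<le> real b * real p^2 + 2*e*real b^2*real p^2)"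
      by (intro disjI1 exI[of _ "{}"]) (simp add: D_empty)
  qed
next
  case (Suc s)
  define \<beta> where "\<beta> = e^k/(2*real k^2)"
  have \<beta>pos: "\<beta> > 0" unfolding \<beta>_def using e kpos by simp
  have \<beta>le: "\<beta> \<le> 1"
  proof -
    have "e^k \<le> 1" using e by (simp add: power_le_one)
    moreover have "1 \<le> 2*real k^2"
    proof -
      have "1 \<le> real k" using kpos by simp
      then have "1 \<le> real k^2" by (rule one_le_power)
      then show ?thesis by simp
    qed
    ultimately show ?thesis unfolding \<beta>_def by (simp add: divide_le_eq)
  qed
  have e0: "0 \<le> e" using e by simp
  have ib: "1 \<le> 1/\<beta>" using \<beta>pos \<beta>le by simp
  have ibs: "1 \<le> (1/\<beta>)^s" using ib by (rule one_le_power)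
  have symE: "\<forall>x\<in>{0..<n}. \<forall>y\<in>{0..<n}. EG x y = EG y x" using og unfolding ograph_def by auto
  have symC: "\<forall>x\<in>{0..<n}. \<forall>y\<in>{0..<n}. compl_graph EG x y = compl_graph EG y x"
    using symE unfolding compl_graph_def by auto
  show ?case
  proof (intro allI impI)
    fix a b :: nat and W :: "nat set"
    assume ab: "a + b = Suc s" and W: "W \<subseteq> {0..<n}" and cW: "real (card W) \<ge> (1/(e^k/(2*real k^2)))^Suc s * (2*real p)"
    have finW: "finite W" using W finite_subset by blast
    let ?L = "\<exists>U. U \<subseteq> W \<and> card U = a*p \<and> real (D EG U) \<le> real a * real p^2 + 2*e*real a^2*real p^2"
    let ?R = "\<exists>U. U \<subseteq> W \<and> card U = b*p \<and> real (D (compl_graph EG) U) \<le> real b * real p^2 + 2*e*real b^2*real p^2"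
    show "?L \<or> ?R"
    proof (cases "a = 0 \<or> b = 0")
      case True
      then show ?thesis
      proof
        assume "a = 0" then show ?thesis by (intro disjI1 exI[of _ "{}"]) (simp add: D_empty)
      next
        assume "b = 0" then show ?thesis by (intro disjI2 exI[of _ "{}"]) (simp add: D_empty)
      qed
    next
      case False
      have cW': "real (card W) \<ge> (1/\<beta>)^Suc s * (2*real p)" using cW unfolding \<beta>_def by simp
      have big: "(1/\<beta>)^s * (2*real p) \<le> \<beta> * real (card W)"
      proof -
        have "\<beta> * ((1/\<beta>)^Suc s * (2*real p)) \<le> \<beta> * real (card W)"
          using cW' \<beta>pos by (intro mult_left_mono) auto
        moreover have "\<beta> * ((1/\<beta>)^Suc s * (2*real p)) = (1/\<beta>)^s * (2*real p)"
          using \<beta>pos by simp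
        ultimately show ?thesis by simp
      qed
      have p2: "2 * real p \<le> (1/\<beta>)^s * (2*real p)"
        using ibs by (simp add: mult_le_cancel_right1)
      have "\<beta> * real (card W) \<le> real (card W)" using \<beta>le \<beta>pos by (simp add: mult_left_le_one_le)
      then have "2 * real p \<le> real (card W)" using big p2 by linarith
      then have m: "2*k \<le> card W" using pk by linarith
      obtain A B where AB: "A \<subseteq> W" "B \<subseteq> W" "A \<inter> B = {}" "real (card A) \<ge> \<beta> * real (card W)"
        "real (card B) \<ge> \<beta> * real (card W)" "sp EG A B e \<or> sp (\<lambda>x y. \<not> EG x y) A B e"
        using pair[OF og oh nind W kpos e m] unfolding \<beta>_def by blast
      have cA: "real (card A) \<ge> (1/(e^k/(2*real k^2)))^s * (2*real p)" using AB(4) big unfolding \<beta>_def by simp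
      have cB: "2*p \<le> card B" using AB(5) big p2 by linarith
      have AW: "A \<subseteq> {0..<n}" using AB W by auto
      have finA: "finite A" "finite B" using AB finW finite_subset by blast+
      have symAB: "\<forall>x\<in>A\<union>B. \<forall>y\<in>A\<union>B. EG x y = EG y x" using symE AB W by blast
      have symABc: "\<forall>x\<in>A\<union>B. \<forall>y\<in>A\<union>B. compl_graph EG x y = compl_graph EG y x" using symC AB W by blast
      from AB(6) show ?thesis
      proof
        assume spE: "sp EG A B e"
        have abs: "(a-1) + b = s" using ab False by simp
        have IH: "(\<exists>U. U \<subseteq> A \<and> card U = (a-1)*p \<and> real (D EG U) \<le> real (a-1) * real p^2 + 2*e*real (a-1)^2*real p^2) \<or>
          (\<exists>U. U \<subseteq> A \<and> card U = b*p \<and> real (D (compl_graph EG) U) \<le> real b * real p^2 + 2*e*real b^2*real p^2)"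
          by (rule Suc.IH[THEN spec, THEN spec, THEN spec, THEN mp, THEN mp, THEN mp, OF abs AW cA])
        then show ?thesis
        proof
          assume "\<exists>U. U \<subseteq> A \<and> card U = (a-1)*p \<and> real (D EG U) \<le> real (a-1) * real p^2 + 2*e*real (a-1)^2*real p^2"
          then obtain U' where U': "U' \<subseteq> A" "card U' = (a-1)*p" "real (D EG U') \<le> real (a-1) * real p^2 + 2*e*real (a-1)^2*real p^2" by blast
          obtain U where U: "U \<subseteq> A \<union> B" "card U = (a-1+1)*p"
             "real (D EG U) \<le> real (a-1+1) * real p ^ 2 + 2 * e * real (a-1+1) ^ 2 * real p ^ 2"
            using grow[OF symAB finA AB(3) spE e0 U' cB] by blast
          have aa: "a - 1 + 1 = a" using False by simp
          have "U \<subseteq> W" using U(1) AB(1,2) by blast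
          then show ?thesis using U(2,3) unfolding aa by blast
        next
          assume "\<exists>U. U \<subseteq> A \<and> card U = b*p \<and> real (D (compl_graph EG) U) \<le> real b * real p^2 + 2*e*real b^2*real p^2"
          then obtain U where U: "U \<subseteq> A" "card U = b*p" "real (D (compl_graph EG) U) \<le> real b * real p^2 + 2*e*real b^2*real p^2" by blast
          have "U \<subseteq> W" using U(1) AB(1) by (rule order_trans)
          then show ?thesis using U(2,3) by blast
        qed
      next
        assume spN: "sp (\<lambda>x y. \<not> EG x y) A B e"
        have spC: "sp (compl_graph EG) A B e"
          unfolding sp_def
        proof
          fix x assume x: "x \<in> A"
          have "card {y\<in>B. compl_graph EG x y} \<le> card {y\<in>B. \<not> EG x y}"
            using finA by (intro card_mono) (auto simp: compl_graph_def)
          then show "real (card {y\<in>B. compl_graph EG x y}) \<le> e * real (card B)"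
            using spN x unfolding sp_def by (meson of_nat_le_iff order_trans)
        qed
        have abs: "a + (b-1) = s" using ab False by simp
        have IH: "(\<exists>U. U \<subseteq> A \<and> card U = a*p \<and> real (D EG U) \<le> real a * real p^2 + 2*e*real a^2*real p^2) \<or>
          (\<exists>U. U \<subseteq> A \<and> card U = (b-1)*p \<and> real (D (compl_graph EG) U) \<le> real (b-1) * real p^2 + 2*e*real (b-1)^2*real p^2)"
          by (rule Suc.IH[THEN spec, THEN spec, THEN spec, THEN mp, THEN mp, THEN mp, OF abs AW cA])
        then show ?thesis
        proof
          assume "\<exists>U. U \<subseteq> A \<and> card U = a*p \<and> real (D EG U) \<le> real a * real p^2 + 2*e*real a^2*real p^2"
          then obtain U where U: "U \<subseteq> A" "card U = a*p" "real (D EG U) \<le> real a * real p^2 + 2*e*real a^2*real p^2" by blast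
          have "U \<subseteq> W" using U(1) AB(1) by (rule order_trans)
          then show ?thesis using U(2,3) by blast
        next
          assume "\<exists>U. U \<subseteq> A \<and> card U = (b-1)*p \<and> real (D (compl_graph EG) U) \<le> real (b-1) * real p^2 + 2*e*real (b-1)^2*real p^2"
          then obtain U' where U': "U' \<subseteq> A" "card U' = (b-1)*p" "real (D (compl_graph EG) U') \<le> real (b-1) * real p^2 + 2*e*real (b-1)^2*real p^2" by blast
          obtain U where U: "U \<subseteq> A \<union> B" "card U = (b-1+1)*p"
             "real (D (compl_graph EG) U) \<le> real (b-1+1) * real p ^ 2 + 2 * e * real (b-1+1) ^ 2 * real p ^ 2"
            using grow[OF symABc finA AB(3) spC e0 U' cB] by blast
          have bb: "b - 1 + 1 = b" using False by simp
          have "U \<subseteq> W" using U(1) AB(1,2) by blast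
          then show ?thesis using U(2,3) unfolding bb by blast
        qed
      qed
    qed
  qed
qed

lemma finalize:
  fixes F :: "nat \<Rightarrow> nat \<Rightarrow> bool" and U :: "nat set" and \<theta> \<delta> :: real
  assumes finU: "finite U" and sU: "card U > 0" and DU: "real (D F U) \<le> \<theta> * real (card U)^2"
    and th: "\<theta> > 0" and td: "4*\<theta> \<le> \<delta>"
  shows "\<exists>U'. U' \<subseteq> U \<and> real (card U) \<le> 2 * real (card U') \<and> real (max_deg_in F U') \<le> \<delta> * real (card U')"
proof -
  define s where "s = real (card U)"
  have spos: "s > 0" unfolding s_def using sU by simp
  define deg where "deg x = card {y\<in>U. F x y}" for x
  define U' where "U' = {u\<in>U. real (deg u) \<le> 2*\<theta>*s}"
  have small: "2 * card (U - U') \<le> card U"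
  proof (cases "U - U' = {}")
    case True then have "card (U-U') = 0" by (metis card.empty)
    then show ?thesis by simp
  next
    case False
    have "(\<Sum>u\<in>U-U'. 2*\<theta>*s) < (\<Sum>u\<in>U-U'. real (deg u))"
      using False finU unfolding U'_def by (intro sum_strict_mono) auto
    also have "\<dots> \<le> (\<Sum>u\<in>U. real (deg u))" using finU by (intro sum_mono2) auto
    also have "\<dots> = real (D F U)" unfolding D_def deg_def by simp
    also have "\<dots> \<le> \<theta> * s^2" using DU unfolding s_def .
    finally have "(real (card (U-U')) * 2) * (\<theta> * s) < s * (\<theta> * s)"
      by (simp add: power2_eq_square mult_ac)
    then have "real (card (U-U')) * 2 < s" using th spos
      by (metis mult_less_cancel_right_pos mult_pos_pos)
    then show ?thesis unfolding s_def by linarith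
  qed
  have U'U: "U' \<subseteq> U" unfolding U'_def by auto
  have "card (U - U') = card U - card U'" using U'U finU by (simp add: card_Diff_subset finite_subset)
  moreover have "card U' \<le> card U" using U'U finU by (simp add: card_mono)
  ultimately have cc: "card U \<le> 2 * card U'" using small by linarith
  then have ccr: "real (card U) \<le> 2 * real (card U')" by (metis of_nat_le_iff of_nat_mult of_nat_numeral)
  have finU': "finite U'" using U'U finU finite_subset by blast
  have ne: "U' \<noteq> {}" using cc sU by auto
  have degb: "real (deg_in F U' u) \<le> \<delta> * real (card U')" if u: "u \<in> U'" for u
  proof -
    have "deg_in F U' u \<le> deg u" unfolding deg_in_def deg_def
      using finU U'U by (intro card_mono) auto
    then have "real (deg_in F U' u) \<le> real (deg u)" by simp
    also have "\<dots> \<le> 2*\<theta>*s" using u unfolding U'_def by simp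
    also have "\<dots> \<le> 2*\<theta>*(2 * real (card U'))" using ccr th unfolding s_def by simp
    also have "\<dots> = (4*\<theta>) * real (card U')" by simp
    also have "\<dots> \<le> \<delta> * real (card U')" using td by (intro mult_right_mono) auto
    finally show ?thesis .
  qed
  have "max_deg_in F U' \<in> deg_in F U' ` U'"
    unfolding max_deg_in_def using ne finU' by (simp add: Max_in)
  then obtain u where "u \<in> U'" "max_deg_in F U' = deg_in F U' u" by auto
  then have "real (max_deg_in F U') \<le> \<delta> * real (card U')" using degb by simp
  then show ?thesis using U'U ccr by blast
qed

theorem corollary12:
  fixes k :: nat and EH :: "nat \<Rightarrow> nat \<Rightarrow> bool" and \<delta> :: real
  assumes "ograph k EH" and "\<delta> > 0"
  shows "\<exists>c2::real. c2 > 0 \<and>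
    (\<forall>n EG. ograph n EG \<longrightarrow> \<not> induced_ord_sub k EH n EG \<longrightarrow>
      (\<exists>U. U \<subseteq> {0..<n} \<and> real (card U) \<ge> c2 * real n \<and>
           (real (max_deg_in EG U) \<le> \<delta> * real (card U) \<or>
            real (max_deg_in (compl_graph EG) U) \<le> \<delta> * real (card U))))"
proof (cases "k = 0")
  case True
  have "induced_ord_sub k EH n EG" for n EG unfolding induced_ord_sub_def using True by simp
  then show ?thesis by (intro exI[of _ 1]) auto
next
  case False
  then have kpos: "k > 0" by simp
  note oh = assms(1)
  have dpos: "\<delta> > 0" by (rule assms(2))
  define e where "e = min (\<delta>/16) 1"
  have e: "0 < e" "e \<le> 1" "e \<le> \<delta>/16" unfolding e_def using dpos by auto
  define A0 :: nat where "A0 = nat \<lceil>8/\<delta>\<rceil>"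
  have A0r: "8/\<delta> \<le> real A0" unfolding A0_def by linarith
  have A0pos: "A0 \<ge> 1"
  proof -
    have "0 < 8/\<delta>" using dpos by simp
    then show ?thesis using A0r by linarith
  qed
  define \<beta> where "\<beta> = e^k/(2*real k^2)"
  have \<beta>pos: "\<beta> > 0" unfolding \<beta>_def using e kpos by simp
  define \<gamma> where "\<gamma> = \<beta>^(2*A0)"
  have \<gamma>pos: "\<gamma> > 0" unfolding \<gamma>_def using \<beta>pos by simp
  define c2 where "c2 = \<gamma>/(8*(real k+1))"
  have c2pos: "c2 > 0" unfolding c2_def using \<gamma>pos by simp
  show ?thesis
  proof (intro exI[of _ c2] conjI c2pos allI impI)
    fix n EG assume og: "ograph n EG" and nind: "\<not> induced_ord_sub k EH n EG"
    show "\<exists>U. U \<subseteq> {0..<n} \<and> real (card U) \<ge> c2 * real n \<and>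
           (real (max_deg_in EG U) \<le> \<delta> * real (card U) \<or>
            real (max_deg_in (compl_graph EG) U) \<le> \<delta> * real (card U))"
    proof (cases "real n * \<gamma> / 2 < real k + 1")
      case True
      show ?thesis
      proof (cases "n = 0")
        case True
        then show ?thesis by (intro exI[of _ "{}"]) (simp add: max_deg_in_def)
      next
        case False
        have "c2 * real n = (real n * \<gamma> / 2) / (4 * (real k + 1))" unfolding c2_def by (simp add: field_simps)
        also have "\<dots> \<le> (real k + 1) / (4 * (real k + 1))"
          using True by (intro divide_right_mono) auto
        also have "\<dots> \<le> 1" by simp
        finally have c1: "c2 * real n \<le> 1" .
        have em: "{v\<in>{0::nat}. v \<noteq> 0 \<and> EG 0 v} = {}" by auto
        have md: "max_deg_in EG {0} = 0" unfolding max_deg_in_def deg_in_def using em by simp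
        show ?thesis using False c1 md dpos by (intro exI[of _ "{0}"]) auto
      qed
    next
      case False
      define x where "x = real n * \<gamma> / 2"
      have xk: "real k + 1 \<le> x" using False unfolding x_def by simp
      define p where "p = nat \<lfloor>x\<rfloor>"
      have pfl: "real p \<le> x" "x - 1 < real p" unfolding p_def using xk by linarith+
      have pk1: "k + 1 \<le> p" unfolding p_def using xk by linarith
      then have pk: "k \<le> p" by simp
      have Wc: "real (card {0..<n}) \<ge> (1/(e^k/(2*real k^2)))^(A0 + A0) * (2*real p)"
      proof -
        have eq: "(1/(e^k/(2*real k^2)))^(A0 + A0) = 1/\<gamma>" unfolding \<gamma>_def \<beta>_def mult_2
          by (rule power_one_over)
        have "2 * real p \<le> real n * \<gamma>" using pfl unfolding x_def by simp
        then have "(2 * real p) / \<gamma> \<le> real n" using \<gamma>pos by (simp add: pos_divide_le_eq)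
        then show ?thesis unfolding eq by simp
      qed
      have cl: "(\<exists>U. U \<subseteq> {0..<n} \<and> card U = A0*p \<and> real (D EG U) \<le> real A0 * real p^2 + 2*e*real A0^2*real p^2) \<or>
     (\<exists>U. U \<subseteq> {0..<n} \<and> card U = A0*p \<and> real (D (compl_graph EG) U) \<le> real A0 * real p^2 + 2*e*real A0^2*real p^2)"
        by (rule claim[OF og oh nind kpos e(1) e(2) pk, THEN spec, THEN spec, THEN spec, THEN mp, THEN mp, THEN mp, OF refl _ Wc]) simp
      define \<theta> where "\<theta> = 1/real A0 + 2*e"
      have th: "\<theta> > 0" unfolding \<theta>_def using e A0pos by (simp add: add_pos_pos)
      have td: "4*\<theta> \<le> \<delta>"
      proof -
        have "4/real A0 \<le> \<delta>/2"
        proof -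
          have "8 \<le> \<delta> * real A0" using A0r dpos by (simp add: divide_le_eq mult.commute)
          then show ?thesis using A0pos by (simp add: divide_le_eq mult.commute)
        qed
        moreover have "4*\<theta> = 4*(1/real A0) + 8*e" unfolding \<theta>_def by (simp add: algebra_simps)
        ultimately show ?thesis using e by simp
      qed
      have bnd: "real A0 * real p^2 + 2*e*real A0^2*real p^2 = \<theta> * real (A0*p)^2"
      proof -
        have a1: "real A0 * (1/real A0) = 1" using A0pos by simp
        have "\<theta> * real (A0*p)^2 = (real A0 * (1/real A0)) * real A0 * real p^2 + 2*e*real A0^2*real p^2"
          unfolding \<theta>_def by (simp add: power2_eq_square algebra_simps)
        then show ?thesis using a1 by simp
      qed
      have cpos: "A0 * p > 0" using A0pos pk1 by simp
      have size: "c2 * real n \<le> real (A0*p) / 2"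
      proof -
        have "x \<ge> 2" using xk kpos by simp
        then have "x / 2 \<le> real p" using pfl by linarith
        moreover have "real p \<le> real (A0 * p)"
        proof -
          have "real p * 1 \<le> real p * real A0" using A0pos by (intro mult_left_mono) auto
          then show ?thesis by (simp add: mult.commute)
        qed
        moreover have "c2 * real n \<le> x / 4"
        proof -
          have "c2 * real n = x / (4 * (real k + 1))" unfolding c2_def x_def by (simp add: field_simps)
          also have "\<dots> \<le> x / 4" using xk kpos by (intro divide_left_mono) auto
          finally show ?thesis .
        qed
        ultimately show ?thesis by linarith
      qed
      have fin: "\<And>U::nat set. U \<subseteq> {0..<n} \<Longrightarrow> finite U" using finite_subset by blast
      from cl show ?thesis
      proof
        assume "\<exists>U. U \<subseteq> {0..<n} \<and> card U = A0*p \<and> real (D EG U) \<le> real A0 * real p^2 + 2*e*real A0^2*real p^2"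
        then obtain U where U: "U \<subseteq> {0..<n}" "card U = A0*p" "real (D EG U) \<le> real A0 * real p^2 + 2*e*real A0^2*real p^2" by blast
        have DU: "real (D EG U) \<le> \<theta> * real (card U)^2" using U(2,3) bnd by simp
        have cp: "card U > 0" using cpos U(2) by simp
        obtain U' where U': "U' \<subseteq> U" "real (card U) \<le> 2 * real (card U')" "real (max_deg_in EG U') \<le> \<delta> * real (card U')"
          using finalize[OF fin[OF U(1)] cp DU th td] by blast
        have sz: "c2 * real n \<le> real (card U')" using size U(2) U'(2) by simp
        have sub: "U' \<subseteq> {0..<n}" using U'(1) U(1) by (rule order_trans)
        show ?thesis using sub sz U'(3) by blast
      next
        assume "\<exists>U. U \<subseteq> {0..<n} \<and> card U = A0*p \<and> real (D (compl_graph EG) U) \<le> real A0 * real p^2 + 2*e*real A0^2*real p^2"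
        then obtain U where U: "U \<subseteq> {0..<n}" "card U = A0*p" "real (D (compl_graph EG) U) \<le> real A0 * real p^2 + 2*e*real A0^2*real p^2" by blast
        have DU: "real (D (compl_graph EG) U) \<le> \<theta> * real (card U)^2" using U(2,3) bnd by simp
        have cp: "card U > 0" using cpos U(2) by simp
        obtain U' where U': "U' \<subseteq> U" "real (card U) \<le> 2 * real (card U')" "real (max_deg_in (compl_graph EG) U') \<le> \<delta> * real (card U')"
          using finalize[OF fin[OF U(1)] cp DU th td] by blast
        have sz: "c2 * real n \<le> real (card U')" using size U(2) U'(2) by simp
        have sub: "U' \<subseteq> {0..<n}" using U'(1) U(1) by (rule order_trans)
        show ?thesis using sub sz U'(3) by blast
      qed
    qed
  qed
qed

end
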